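(* Let $\mathcal{X}=\{x_k\}_{k=1}^\infty$ be a frame for the real Hilbert space $\ell_2$. The following are equivalent: (1) $\mathcal{X}$ is injective; (2) $\overline{\mathrm{span}}\{\tilde{x}_k\}_{k=1}^\infty=\tilde{\mathbb{H}}$.
   Context: A family $\{x_k\}$ is called injective if whenever a Hilbert–Schmidt self-adjoint operator $T$ on $\ell_2$ satisfies $\langle Tx_k,x_k\rangle=0$ for all $k$, then $T=0$. Let $\tilde{\mathbb{H}}=\left(\sum_{i=1}^\infty\oplus\ell_2\right)_{\ell_2}$ be the $\ell_2$-direct sum of countably many copies of real $\ell_2$, with elements $\vec{x}=(\vec{x}_1,\vec{x}_2,\dots)$ and inner product $\langle\vec{x},\vec{y}\rangle=\sum_i\langle\vec{x}_i,\vec{y}_i\rangle$. For $x=(x_i)_{i=1}^\infty\in\ell_2$ (real), define $\tilde{x}=(\vec{x}_1,\vec{x}_2,\dots)\in\tilde{\mathbb{H}}$ where $\vec{x}_n=(x_nx_n,x_nx_{n+1},x_nx_{n+2},\dots)$ for each $n$. *)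

theory Defs
  imports "HOL-Analysis.Analysis"
begin

definition l2 :: "(nat \<Rightarrow> real) set" where
  "l2 = {x. summable (\<lambda>i. (x i)\<^sup>2)}"

definition l2_inner :: "(nat \<Rightarrow> real) \<Rightarrow> (nat \<Rightarrow> real) \<Rightarrow> real" where
  "l2_inner x y = (\<Sum>i. x i * y i)"

definition l2_norm :: "(nat \<Rightarrow> real) \<Rightarrow> real" where
  "l2_norm x = sqrt (\<Sum>i. (x i)\<^sup>2)"

definition unit_vec :: "nat \<Rightarrow> nat \<Rightarrow> real" where
  "unit_vec j = (\<lambda>i. if i = j then 1 else 0)"

definition is_frame :: "(nat \<Rightarrow> (nat \<Rightarrow> real)) \<Rightarrow> bool" where
  "is_frame xs \<longleftrightarrow> (\<forall>k. xs k \<in> l2) \<and>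
     (\<exists>A B. 0 < A \<and> 0 < B \<and>
       (\<forall>y\<in>l2. summable (\<lambda>k. (l2_inner y (xs k))\<^sup>2) \<and>
                A * (l2_norm y)\<^sup>2 \<le> (\<Sum>k. (l2_inner y (xs k))\<^sup>2) \<and>
                (\<Sum>k. (l2_inner y (xs k))\<^sup>2) \<le> B * (l2_norm y)\<^sup>2))"

text \<open>Bounded linear operators on l2 (only their values on l2 matter).\<close>
definition bounded_linear_l2 :: "((nat \<Rightarrow> real) \<Rightarrow> (nat \<Rightarrow> real)) \<Rightarrow> bool" where
  "bounded_linear_l2 T \<longleftrightarrow>
     (\<forall>x\<in>l2. T x \<in> l2) \<and>
     (\<forall>x\<in>l2. \<forall>y\<in>l2. \<forall>a b::real.
         T (\<lambda>i. a * x i + b * y i) = (\<lambda>i. a * T x i + b * T y i)) \<and>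
     (\<exists>C. \<forall>x\<in>l2. l2_norm (T x) \<le> C * l2_norm x)"

definition hilbert_schmidt_l2 :: "((nat \<Rightarrow> real) \<Rightarrow> (nat \<Rightarrow> real)) \<Rightarrow> bool" where
  "hilbert_schmidt_l2 T \<longleftrightarrow> bounded_linear_l2 T \<and>
     summable (\<lambda>j. (l2_norm (T (unit_vec j)))\<^sup>2)"

definition self_adjoint_l2 :: "((nat \<Rightarrow> real) \<Rightarrow> (nat \<Rightarrow> real)) \<Rightarrow> bool" where
  "self_adjoint_l2 T \<longleftrightarrow> (\<forall>x\<in>l2. \<forall>y\<in>l2. l2_inner (T x) y = l2_inner x (T y))"

definition injective_family :: "(nat \<Rightarrow> (nat \<Rightarrow> real)) \<Rightarrow> bool" where
  "injective_family xs \<longleftrightarrow>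
     (\<forall>T. hilbert_schmidt_l2 T \<and> self_adjoint_l2 T \<and>
          (\<forall>k. l2_inner (T (xs k)) (xs k) = 0) \<longrightarrow> (\<forall>x\<in>l2. T x = (\<lambda>i. 0)))"

definition Htilde :: "(nat \<Rightarrow> nat \<Rightarrow> real) set" where
  "Htilde = {X. (\<forall>n. X n \<in> l2) \<and> summable (\<lambda>n. (l2_norm (X n))\<^sup>2)}"

definition Htilde_norm :: "(nat \<Rightarrow> nat \<Rightarrow> real) \<Rightarrow> real" where
  "Htilde_norm X = sqrt (\<Sum>n. (l2_norm (X n))\<^sup>2)"

definition tilde :: "(nat \<Rightarrow> real) \<Rightarrow> nat \<Rightarrow> nat \<Rightarrow> real" where
  "tilde x = (\<lambda>n m. x n * x (n + m))"

definition closed_span_Htilde :: "(nat \<Rightarrow> (nat \<Rightarrow> nat \<Rightarrow> real)) \<Rightarrow> (nat \<Rightarrow> nat \<Rightarrow> real) set" where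
  "closed_span_Htilde V = {Y \<in> Htilde. \<forall>\<epsilon>>0. \<exists>F c. finite F \<and>
       Htilde_norm (\<lambda>n m. Y n m - (\<Sum>k\<in>F. c k * V k n m)) < \<epsilon>}"

end

theory Submission
  imports Defs
begin

definition sqset :: "(nat \<Rightarrow> 'a::real_normed_vector) set" where
  "sqset = {f. summable (\<lambda>n. (norm (f n))\<^sup>2)}"

lemma sq_ineq: "(norm (a + b::'a::real_normed_vector))\<^sup>2 \<le> 2 * (norm a)\<^sup>2 + 2 * (norm b)\<^sup>2"
proof -
  have "norm (a+b) \<le> norm a + norm b" by (rule norm_triangle_ineq)
  hence "(norm (a+b))\<^sup>2 \<le> (norm a + norm b)\<^sup>2" by (rule power_mono) simp
  also have "\<dots> \<le> 2 * (norm a)\<^sup>2 + 2 * (norm b)\<^sup>2"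
    using sum_squares_bound[of "norm a" "norm b"] power2_sum[of "norm a" "norm b"] by linarith
  finally show ?thesis .
qed

lemma sqset_add: "f \<in> sqset \<Longrightarrow> g \<in> sqset \<Longrightarrow> (\<lambda>n. f n + g n) \<in> sqset"
  unfolding sqset_def mem_Collect_eq
proof -
  assume f: "summable (\<lambda>n. (norm (f n))\<^sup>2)" and g: "summable (\<lambda>n. (norm (g n))\<^sup>2)"
  have s: "summable (\<lambda>n. 2 * (norm (f n))\<^sup>2 + 2 * (norm (g n))\<^sup>2)"
    using f g by (intro summable_add summable_mult)
  show "summable (\<lambda>n. (norm (f n + g n))\<^sup>2)"
    by (rule summable_comparison_test'[OF s], simp only: real_norm_def abs_power2 norm_power, rule sq_ineq)
qed

lemma sqset_scale: "f \<in> sqset \<Longrightarrow> (\<lambda>n. c *\<^sub>R f n) \<in> sqset"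
  unfolding sqset_def by (simp add: power_mult_distrib summable_mult)

lemma sqset_zero: "(\<lambda>n. 0) \<in> sqset"
  unfolding sqset_def by simp

lemma sqset_uminus: "f \<in> sqset \<Longrightarrow> (\<lambda>n. - f n) \<in> sqset"
  unfolding sqset_def by simp

lemma sqset_diff: "f \<in> sqset \<Longrightarrow> g \<in> sqset \<Longrightarrow> (\<lambda>n. f n - g n) \<in> sqset"
  using sqset_add[of f "\<lambda>n. - g n"] sqset_uminus[of g] by simp

lemma inner_abs_bound: "\<bar>inner (a::'a::real_inner) b\<bar> \<le> ((norm a)\<^sup>2 + (norm b)\<^sup>2) / 2"
proof -
  have "\<bar>inner a b\<bar> \<le> norm a * norm b" by (rule Cauchy_Schwarz_ineq2)
  also have "\<dots> \<le> ((norm a)\<^sup>2 + (norm b)\<^sup>2) / 2" using sum_squares_bound[of "norm a" "norm b"] by (simp add: field_simps)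
  finally show ?thesis .
qed

lemma sqset_inner_summable:
  fixes f g :: "nat \<Rightarrow> 'a::real_inner"
  assumes "f \<in> sqset" "g \<in> sqset"
  shows "summable (\<lambda>n. \<bar>inner (f n) (g n)\<bar>)" "summable (\<lambda>n. inner (f n) (g n))"
proof -
  have s: "summable (\<lambda>n. ((norm (f n))\<^sup>2 + (norm (g n))\<^sup>2) / 2)"
    using assms unfolding sqset_def mem_Collect_eq by (intro summable_divide summable_add)
  show 1: "summable (\<lambda>n. \<bar>inner (f n) (g n)\<bar>)"
    by (rule summable_comparison_test'[OF s], simp only: real_norm_def abs_abs, rule inner_abs_bound)
  show "summable (\<lambda>n. inner (f n) (g n))"
    by (rule summable_rabs_cancel[OF 1])
qed

typedef (overloaded) 'a sq = "sqset :: (nat \<Rightarrow> 'a::real_inner) set"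
  using sqset_zero by blast

setup_lifting type_definition_sq

instantiation sq :: (real_inner) real_vector
begin
lift_definition zero_sq :: "'a sq" is "\<lambda>n. 0" by (rule sqset_zero)
lift_definition plus_sq :: "'a sq \<Rightarrow> 'a sq \<Rightarrow> 'a sq" is "\<lambda>f g n. f n + g n" by (rule sqset_add)
lift_definition minus_sq :: "'a sq \<Rightarrow> 'a sq \<Rightarrow> 'a sq" is "\<lambda>f g n. f n - g n" by (rule sqset_diff)
lift_definition uminus_sq :: "'a sq \<Rightarrow> 'a sq" is "\<lambda>f n. - f n" by (rule sqset_uminus)
lift_definition scaleR_sq :: "real \<Rightarrow> 'a sq \<Rightarrow> 'a sq" is "\<lambda>c f n. c *\<^sub>R f n" by (rule sqset_scale)
instance
  by standard (transfer; auto simp: algebra_simps scaleR_add_right scaleR_add_left)+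
end

instantiation sq :: (real_inner) real_inner
begin
lift_definition inner_sq :: "'a sq \<Rightarrow> 'a sq \<Rightarrow> real" is "\<lambda>f g. \<Sum>n. inner (f n) (g n)" .
definition norm_sq :: "'a sq \<Rightarrow> real" where "norm_sq x = sqrt (inner x x)"
definition dist_sq :: "'a sq \<Rightarrow> 'a sq \<Rightarrow> real" where "dist_sq x y = norm (x - y)"
definition sgn_sq :: "'a sq \<Rightarrow> 'a sq" where "sgn_sq x = x /\<^sub>R norm x"
definition uniformity_sq :: "('a sq \<times> 'a sq) filter" where
  "uniformity_sq = (INF e\<in>{0 <..}. principal {(x, y). dist x y < e})"
definition open_sq :: "'a sq set \<Rightarrow> bool" where
  "open_sq U = (\<forall>x\<in>U. eventually (\<lambda>(x', y). x' = x \<longrightarrow> y \<in> U) uniformity)"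
instance
proof
  fix x y z :: "'a sq" and r :: real
  show "inner x y = inner y x" by transfer (simp add: inner_commute)
  show "inner (x + y) z = inner x z + inner y z"
    by transfer (simp add: inner_add_left suminf_add[symmetric] sqset_inner_summable)
  show "inner (r *\<^sub>R x) y = r * inner x y"
    by transfer (simp add: suminf_mult[symmetric] sqset_inner_summable)
  show "0 \<le> inner x x"
    by transfer (simp add: suminf_nonneg sqset_inner_summable)
  show "(inner x x = 0) = (x = 0)"
  proof transfer
    fix f :: "nat \<Rightarrow> 'a" assume f: "f \<in> sqset"
    have s: "summable (\<lambda>n. inner (f n) (f n))" using sqset_inner_summable[OF f f] by simp
    show "((\<Sum>n. inner (f n) (f n)) = 0) = (f = (\<lambda>n. 0))"
      using suminf_eq_zero_iff[OF s] by (auto simp: fun_eq_iff)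
  qed
  show "norm x = sqrt (inner x x)" by (simp add: norm_sq_def)
qed (rule sgn_sq_def dist_sq_def uniformity_sq_def open_sq_def)+
end

lemma sq_norm_sq: "(norm (x::'a::real_inner sq))\<^sup>2 = (\<Sum>n. (norm (Rep_sq x n))\<^sup>2)"
proof -
  have "(norm x)\<^sup>2 = inner x x" by (simp add: power2_norm_eq_inner)
  also have "\<dots> = (\<Sum>n. inner (Rep_sq x n) (Rep_sq x n))" by (simp add: inner_sq.rep_eq)
  finally show ?thesis by (simp add: power2_norm_eq_inner)
qed

lemma sq_summable: "summable (\<lambda>n. (norm (Rep_sq (x::'a::real_inner sq) n))\<^sup>2)"
  using Rep_sq[of x] by (simp add: sqset_def)

lemma sq_partial_le: "(\<Sum>n<M. (norm (Rep_sq (x::'a::real_inner sq) n))\<^sup>2) \<le> (norm x)\<^sup>2"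
  unfolding sq_norm_sq by (rule sum_le_suminf[OF sq_summable]) auto

lemma sq_coord_le: "norm (Rep_sq (x::'a::real_inner sq) n) \<le> norm x"
proof -
  have "(\<Sum>i<Suc n. (norm (Rep_sq x i))\<^sup>2) = (\<Sum>i<n. (norm (Rep_sq x i))\<^sup>2) + (norm (Rep_sq x n))\<^sup>2"
    by (rule sum.lessThan_Suc)
  moreover have "(\<Sum>i<n. (norm (Rep_sq x i))\<^sup>2) \<ge> 0" by (rule sum_nonneg) simp
  ultimately have "(norm (Rep_sq x n))\<^sup>2 \<le> (norm x)\<^sup>2" using sq_partial_le[where M="Suc n" and x=x] by linarith
  thus ?thesis by (rule power2_le_imp_le) simp
qed

lemma Rep_sq_diff: "Rep_sq (x - y) n = Rep_sq x n - Rep_sq y n"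
  by (simp add: minus_sq.rep_eq)

instance sq :: ("{real_inner,complete_space}") complete_space
proof
  fix X :: "nat \<Rightarrow> 'a sq" assume C: "Cauchy X"
  have "\<exists>l. (\<lambda>j. Rep_sq (X j) n) \<longlonglongrightarrow> l" for n
  proof -
    have "Cauchy (\<lambda>j. Rep_sq (X j) n)"
    proof (rule metric_CauchyI)
      fix e :: real assume "0 < e"
      then obtain M where M: "\<forall>j\<ge>M. \<forall>k\<ge>M. dist (X j) (X k) < e" using metric_CauchyD[OF C] by presburger
      show "\<exists>M. \<forall>m\<ge>M. \<forall>na\<ge>M. dist (Rep_sq (X m) n) (Rep_sq (X na) n) < e"
      proof (intro exI allI impI)
        fix j k assume "M \<le> j" "M \<le> k"
        hence "dist (X j) (X k) < e" using M by blast
        moreover have "dist (Rep_sq (X j) n) (Rep_sq (X k) n) \<le> dist (X j) (X k)"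
          using sq_coord_le[of "X j - X k" n] by (simp add: dist_norm Rep_sq_diff)
        ultimately show "dist (Rep_sq (X j) n) (Rep_sq (X k) n) < e" by linarith
      qed
    qed
    hence "convergent (\<lambda>j. Rep_sq (X j) n)" by (simp add: Cauchy_convergent_iff)
    thus ?thesis by (simp add: convergent_def)
  qed
  then obtain g where g: "\<And>n. (\<lambda>j. Rep_sq (X j) n) \<longlonglongrightarrow> g n" by metis
  have key: "\<exists>N. \<forall>j\<ge>N. (\<lambda>n. Rep_sq (X j) n - g n) \<in> sqset \<and>
                (\<Sum>n. (norm (Rep_sq (X j) n - g n))\<^sup>2) \<le> e\<^sup>2" if "e > 0" for e :: real
  proof -
    obtain N where N: "\<forall>j\<ge>N. \<forall>k\<ge>N. dist (X j) (X k) < e" using metric_CauchyD[OF C \<open>e > 0\<close>] by presburger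
    have "(\<lambda>n. Rep_sq (X j) n - g n) \<in> sqset \<and> (\<Sum>n. (norm (Rep_sq (X j) n - g n))\<^sup>2) \<le> e\<^sup>2"
      if j: "j \<ge> N" for j
    proof -
      have part: "(\<Sum>n<M. (norm (Rep_sq (X j) n - g n))\<^sup>2) \<le> e\<^sup>2" for M
      proof (rule LIMSEQ_le_const2)
        show "(\<lambda>k. \<Sum>n<M. (norm (Rep_sq (X j) n - Rep_sq (X k) n))\<^sup>2) \<longlonglongrightarrow> (\<Sum>n<M. (norm (Rep_sq (X j) n - g n))\<^sup>2)"
          by (intro tendsto_intros g)
        show "\<exists>N'. \<forall>k\<ge>N'. (\<Sum>n<M. (norm (Rep_sq (X j) n - Rep_sq (X k) n))\<^sup>2) \<le> e\<^sup>2"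
        proof (intro exI allI impI)
          fix k assume k: "N \<le> k"
          have "(\<Sum>n<M. (norm (Rep_sq (X j) n - Rep_sq (X k) n))\<^sup>2) \<le> (norm (X j - X k))\<^sup>2"
            using sq_partial_le[where M=M and x="X j - X k"] by (simp add: Rep_sq_diff)
          also have "\<dots> \<le> e\<^sup>2"
            using N j k by (intro power_mono) (auto simp: dist_norm less_imp_le)
          finally show "(\<Sum>n<M. (norm (Rep_sq (X j) n - Rep_sq (X k) n))\<^sup>2) \<le> e\<^sup>2" .
        qed
      qed
      have s: "summable (\<lambda>n. (norm (Rep_sq (X j) n - g n))\<^sup>2)"
        by (rule summableI_nonneg_bounded[OF _ part]) simp
      have "(\<Sum>n. (norm (Rep_sq (X j) n - g n))\<^sup>2) \<le> e\<^sup>2" by (rule suminf_le_const[OF s part])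
      with s show ?thesis by (simp add: sqset_def)
    qed
    thus ?thesis by blast
  qed
  from key[of 1] obtain N0 where N0: "(\<lambda>n. Rep_sq (X N0) n - g n) \<in> sqset" by force
  have gs: "g \<in> sqset"
    using sqset_diff[OF Rep_sq[of "X N0"] N0] by simp
  have "X \<longlonglongrightarrow> Abs_sq g"
  proof (rule metric_LIMSEQ_I)
    fix e :: real assume e: "0 < e"
    obtain N where N: "\<forall>j\<ge>N. (\<lambda>n. Rep_sq (X j) n - g n) \<in> sqset \<and>
                (\<Sum>n. (norm (Rep_sq (X j) n - g n))\<^sup>2) \<le> (e/2)\<^sup>2" using key[of "e/2"] e by (metis half_gt_zero)
    show "\<exists>N. \<forall>j\<ge>N. dist (X j) (Abs_sq g) < e"
    proof (intro exI allI impI)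
      fix j assume "N \<le> j"
      hence "(\<Sum>n. (norm (Rep_sq (X j) n - g n))\<^sup>2) \<le> (e/2)\<^sup>2" using N by blast
      moreover have "(norm (X j - Abs_sq g))\<^sup>2 = (\<Sum>n. (norm (Rep_sq (X j) n - g n))\<^sup>2)"
        unfolding sq_norm_sq by (simp add: Rep_sq_diff Abs_sq_inverse gs)
      ultimately have "(norm (X j - Abs_sq g))\<^sup>2 \<le> (e/2)\<^sup>2" by simp
      hence "norm (X j - Abs_sq g) \<le> e/2" by (rule power2_le_imp_le) (use e in simp)
      thus "dist (X j) (Abs_sq g) < e" using e by (simp add: dist_norm)
    qed
  qed
  thus "convergent X" by (auto simp: convergent_def)
qed

lemma parallelogram: "(norm (u + v::'a::real_inner))\<^sup>2 + (norm (u - v))\<^sup>2 = 2 * (norm u)\<^sup>2 + 2 * (norm v)\<^sup>2"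
  by (simp add: power2_norm_eq_inner inner_add_left inner_add_right inner_diff_left inner_diff_right inner_commute)

lemma orth_exists:
  fixes Y :: "'a::{real_inner,complete_space}"
  assumes sub: "subspace Sp" and e: "e > 0" and far: "\<forall>z\<in>Sp. e \<le> norm (Y - z)"
  shows "\<exists>W. W \<noteq> 0 \<and> (\<forall>s\<in>Sp. inner W s = 0)"
proof -
  define d where "d = (INF z\<in>Sp. norm (Y - z))"
  have ne: "Sp \<noteq> {}" using sub by (auto simp: subspace_def)
  have bdd: "bdd_below ((\<lambda>z. norm (Y - z)) ` Sp)" by (rule bdd_belowI2[where m=0]) simp
  have de: "e \<le> d" unfolding d_def by (rule cINF_greatest[OF ne]) (use far in blast)
  have dle: "d \<le> norm (Y - z)" if "z \<in> Sp" for z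
    unfolding d_def by (rule cINF_lower[OF bdd that])
  have "\<exists>z\<in>Sp. norm (Y - z) < d + 1 / (real j + 1)" for j
  proof -
    have "d < d + 1 / (real j + 1)" by simp
    thus ?thesis using cINF_less_iff[OF ne bdd, of "d + 1 / (real j + 1)"] unfolding d_def by simp
  qed
  then obtain z where zS: "\<And>j. z j \<in> Sp" and zlt: "\<And>j. norm (Y - z j) < d + 1 / (real j + 1)"
    by metis
  define a where "a j = norm (Y - z j)" for j
  have a_ge: "d \<le> a j" for j using dle[OF zS] a_def by simp
  have a_lt: "a j < d + 1 / (real j + 1)" for j using zlt a_def by simp
  have d0: "0 < d" using e de by linarith
  have asq: "(a j)\<^sup>2 \<le> d\<^sup>2 + (2*d+1) / (real j + 1)" for j
  proof -
    have h: "0 \<le> a j - d" "a j - d \<le> 1 / (real j + 1)" "1 / (real j + 1) \<le> 1"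
      using a_ge[of j] a_lt[of j] by auto
    have "(a j)\<^sup>2 - d\<^sup>2 = (a j - d) * (a j + d)" by (simp add: power2_eq_square algebra_simps)
    also have "\<dots> \<le> (1 / (real j + 1)) * (2*d+1)"
      by (rule mult_mono) (use h d0 in linarith)+
    finally show ?thesis by simp
  qed
  have mid: "d\<^sup>2 \<le> (norm (Y - (1/2) *\<^sub>R (z i + z j)))\<^sup>2" for i j
  proof -
    have "(1/2) *\<^sub>R (z i + z j) \<in> Sp"
      using sub zS by (simp add: subspace_add subspace_scale)
    hence "d \<le> norm (Y - (1/2) *\<^sub>R (z i + z j))" by (rule dle)
    thus ?thesis using d0 by (intro power_mono) auto
  qed
  have pd: "(norm (z i - z j))\<^sup>2 \<le> 2 * ((2*d+1) / (real i + 1)) + 2 * ((2*d+1) / (real j + 1))" for i j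
  proof -
    have eq1: "(Y - z i) + (Y - z j) = 2 *\<^sub>R (Y - (1/2) *\<^sub>R (z i + z j))"
      by (simp add: algebra_simps scaleR_2)
    have eq2: "(Y - z i) - (Y - z j) = - (z i - z j)" by simp
    have "(norm ((Y - z i) + (Y - z j)))\<^sup>2 + (norm ((Y - z i) - (Y - z j)))\<^sup>2 = 2 * (a i)\<^sup>2 + 2 * (a j)\<^sup>2"
      unfolding a_def by (rule parallelogram)
    hence "4 * (norm (Y - (1/2) *\<^sub>R (z i + z j)))\<^sup>2 + (norm (z i - z j))\<^sup>2 = 2 * (a i)\<^sup>2 + 2 * (a j)\<^sup>2"
      unfolding eq1 eq2 norm_minus_cancel by (simp add: power_mult_distrib)
    thus ?thesis using mid[of i j] asq[of i] asq[of j] by linarith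
  qed
  have "Cauchy z"
  proof (rule metric_CauchyI)
    fix r :: real assume r: "0 < r"
    obtain N :: nat where N: "4 * (2*d+1) / r\<^sup>2 < real N" using reals_Archimedean2 by blast
    show "\<exists>M. \<forall>m\<ge>M. \<forall>n\<ge>M. dist (z m) (z n) < r"
    proof (intro exI allI impI)
      fix i j assume i: "N \<le> i" and j: "N \<le> j"
      have "(2*d+1) / (real i + 1) \<le> (2*d+1) / (real N + 1)" using i d0 by (intro divide_left_mono) auto
      moreover have "(2*d+1) / (real j + 1) \<le> (2*d+1) / (real N + 1)" using j d0 by (intro divide_left_mono) auto
      ultimately have "(norm (z i - z j))\<^sup>2 \<le> 4 * (2*d+1) / (real N + 1)"
        using pd[of i j] by linarith
      also have "\<dots> < r\<^sup>2"
      proof -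
        have "4 * (2*d+1) < r\<^sup>2 * real N" using N r by (simp add: field_simps)
        moreover have "r\<^sup>2 * real N < r\<^sup>2 * (real N + 1)" using r by simp
        ultimately have "4 * (2*d+1) < r\<^sup>2 * (real N + 1)" by linarith
        thus ?thesis by (simp add: pos_divide_less_eq)
      qed
      finally have "(norm (z i - z j))\<^sup>2 < r\<^sup>2" .
      hence "norm (z i - z j) < r" by (rule power_less_imp_less_base) (use r in simp)
      thus "dist (z i) (z j) < r" by (simp add: dist_norm)
    qed
  qed
  hence "convergent z" by (simp add: Cauchy_convergent_iff)
  then obtain zl where zl: "z \<longlonglongrightarrow> zl" by (auto simp: convergent_def)
  define W where "W = Y - zl"
  have aW: "a \<longlonglongrightarrow> norm W" unfolding a_def W_def by (intro tendsto_intros zl)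
  have "(\<lambda>j. d + 1 / (real j + 1)) \<longlonglongrightarrow> d + 0"
    using LIMSEQ_inverse_real_of_nat by (intro tendsto_intros) (simp add: inverse_eq_divide add.commute)
  hence "norm W \<le> d" using aW a_lt by (intro LIMSEQ_le[OF aW]) (auto intro: less_imp_le)
  have var: "d \<le> norm (W - t *\<^sub>R s)" if s: "s \<in> Sp" for t s
  proof -
    have "(\<lambda>j. norm (Y - (z j + t *\<^sub>R s))) \<longlonglongrightarrow> norm (Y - (zl + t *\<^sub>R s))"
      by (intro tendsto_intros zl)
    moreover have "Y - (zl + t *\<^sub>R s) = W - t *\<^sub>R s" by (simp add: W_def)
    ultimately have "(\<lambda>j. norm (Y - (z j + t *\<^sub>R s))) \<longlonglongrightarrow> norm (W - t *\<^sub>R s)" by simp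
    moreover have "d \<le> norm (Y - (z j + t *\<^sub>R s))" for j
      using sub zS s by (intro dle) (simp add: subspace_add subspace_scale)
    ultimately show ?thesis by (intro LIMSEQ_le_const) auto
  qed
  have Wd: "norm W \<le> d" by fact
  show ?thesis
  proof (intro exI conjI ballI)
    show "W \<noteq> 0"
    proof
      assume "W = 0"
      hence "d \<le> norm (0::'a)" using var[of 0 0] sub by (simp add: subspace_0)
      thus False using d0 by simp
    qed
    fix s assume s: "s \<in> Sp"
    show "inner W s = 0"
    proof (rule ccontr)
      define c where "c = inner W s"
      define q where "q = inner s s"
      assume "inner W s \<noteq> 0"
      hence c0: "c \<noteq> 0" by (simp add: c_def)
      define t where "t = c / (q + 1)"
      have q0: "0 \<le> q" by (simp add: q_def)
      have eqn: "(norm (W - t *\<^sub>R s))\<^sup>2 = (norm W)\<^sup>2 + (- 2 * t * c + t\<^sup>2 * q)"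
        unfolding power2_norm_eq_inner by (simp add: inner_diff_left inner_diff_right inner_commute c_def q_def
            power2_eq_square algebra_simps)
      have "- 2 * t * c + t\<^sup>2 * q = c\<^sup>2 * (- q - 2) / (q + 1)\<^sup>2"
      proof -
        have hq: "q + 1 \<noteq> 0" using q0 by linarith
        show ?thesis unfolding t_def using hq by (simp add: divide_simps power2_eq_square) (simp add: algebra_simps)
      qed
      also have "\<dots> < 0"
        using q0 c0 by (intro divide_neg_pos mult_pos_neg) auto
      finally have "- 2 * t * c + t\<^sup>2 * q < 0" .
      hence "(norm (W - t *\<^sub>R s))\<^sup>2 < (norm W)\<^sup>2" using eqn by linarith
      moreover have "(norm W)\<^sup>2 \<le> (norm (W - t *\<^sub>R s))\<^sup>2"
        using var[OF s, of t] Wd by (intro power_mono) auto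
      ultimately show False by linarith
    qed
  qed
qed

lemma infsum_suminf_abs:
  fixes h :: "nat \<Rightarrow> real"
  assumes "summable (\<lambda>n. \<bar>h n\<bar>)"
  shows "infsum h UNIV = suminf h" "h summable_on UNIV"
proof -
  have s: "summable (\<lambda>n. norm (h n))" using assms by simp
  have "h sums suminf h" using summable_rabs_cancel[OF assms] by (rule summable_sums)
  hence "(h has_sum suminf h) UNIV" by (rule norm_summable_imp_has_sum[OF s])
  thus "infsum h UNIV = suminf h" "h summable_on UNIV" by (auto simp: has_sum_iff)
qed

lemma summable_of_abs_summable_on:
  fixes h :: "nat \<Rightarrow> real"
  assumes "(\<lambda>z. norm (h z)) summable_on UNIV"
  shows "summable (\<lambda>n. \<bar>h n\<bar>)"
  using assms summable_on_UNIV_nonneg_real_iff[of "\<lambda>n. norm (h n)"] by simp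

lemma abs_summable_on_of_summable:
  fixes h :: "nat \<Rightarrow> real"
  assumes "summable (\<lambda>n. \<bar>h n\<bar>)"
  shows "(\<lambda>z. norm (h z)) summable_on UNIV"
  using assms summable_on_UNIV_nonneg_real_iff[of "\<lambda>n. norm (h n)"] by simp

lemma DS:
  fixes f :: "nat \<Rightarrow> nat \<Rightarrow> real"
  assumes rows: "\<And>i. summable (\<lambda>j. \<bar>f i j\<bar>)" and tot: "summable (\<lambda>i. \<Sum>j. \<bar>f i j\<bar>)"
  shows "(\<Sum>i. \<Sum>j. f i j) = (\<Sum>j. \<Sum>i. f i j)"
    and "\<And>j. summable (\<lambda>i. \<bar>f i j\<bar>)"
    and "summable (\<lambda>j. \<Sum>i. \<bar>f i j\<bar>)"
proof -
  define F where "F = (\<lambda>(i,j). f i j)"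
  have rowinf: "infsum (\<lambda>j. norm (F (i, j))) UNIV = (\<Sum>j. \<bar>f i j\<bar>)" for i
    using infsum_suminf_abs(1)[of "\<lambda>j. \<bar>f i j\<bar>"] rows[of i] by (simp add: F_def)
  have "(\<lambda>z. norm (F z)) summable_on Sigma UNIV (\<lambda>_. UNIV)"
  proof (rule iffD2[OF Infinite_Sum.abs_summable_on_Sigma_iff], intro conjI ballI)
    show "(\<lambda>j. norm (F (i, j))) summable_on UNIV" for i
      using abs_summable_on_of_summable[of "\<lambda>j. f i j"] rows[of i] by (simp add: F_def)
    have "summable (\<lambda>i. \<bar>infsum (\<lambda>j. norm (F (i, j))) UNIV\<bar>)"
      unfolding rowinf using tot by (simp add: suminf_nonneg rows)
    thus "(\<lambda>i. norm (infsum (\<lambda>j. norm (F (i, j))) UNIV)) summable_on UNIV"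
      by (rule abs_summable_on_of_summable)
  qed
  hence FS: "(\<lambda>z. norm (F z)) summable_on UNIV \<times> UNIV" by simp
  hence Fs: "(\<lambda>(i,j). f i j) summable_on UNIV \<times> UNIV" unfolding F_def by (rule abs_summable_summable)
  have FSw: "(\<lambda>(j,i). norm (F (i,j))) summable_on UNIV \<times> UNIV"
    using FS summable_on_swap[of "\<lambda>p. norm (F p)" UNIV UNIV] by simp
  hence "(\<lambda>z. norm ((\<lambda>(j,i). F (i,j)) z)) summable_on Sigma UNIV (\<lambda>_. UNIV)"
    by (simp add: case_prod_unfold)
  hence sw: "(\<forall>j. (\<lambda>i. norm (F (i, j))) summable_on UNIV) \<and>
         (\<lambda>j. norm (infsum (\<lambda>i. norm (F (i, j))) UNIV)) summable_on UNIV"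
    using Infinite_Sum.abs_summable_on_Sigma_iff[of "\<lambda>(j,i). F (i,j)" UNIV "\<lambda>_. UNIV"] by simp
  show cols: "summable (\<lambda>i. \<bar>f i j\<bar>)" for j
    using sw summable_of_abs_summable_on[of "\<lambda>i. f i j"] by (simp add: F_def)
  have colinf: "infsum (\<lambda>i. \<bar>F (i, j)\<bar>) UNIV = (\<Sum>i. \<bar>f i j\<bar>)" for j
    using infsum_suminf_abs(1)[of "\<lambda>i. \<bar>f i j\<bar>"] cols[of j] by (simp add: F_def)
  have ctot: "summable (\<lambda>j. \<bar>\<Sum>i. \<bar>f i j\<bar>\<bar>)"
    using sw summable_of_abs_summable_on[of "\<lambda>j. infsum (\<lambda>i. norm (F (i, j))) UNIV"]
    by (simp add: colinf)
  thus "summable (\<lambda>j. \<Sum>i. \<bar>f i j\<bar>)" by (simp add: suminf_nonneg cols)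
  have sw2: "infsum (\<lambda>i. infsum (\<lambda>j. f i j) UNIV) UNIV = infsum (\<lambda>j. infsum (\<lambda>i. f i j) UNIV) UNIV"
    by (rule infsum_swap_banach[OF Fs])
  have r1: "infsum (\<lambda>j. f i j) UNIV = (\<Sum>j. f i j)" for i by (rule infsum_suminf_abs(1)[OF rows])
  have c1: "infsum (\<lambda>i. f i j) UNIV = (\<Sum>i. f i j)" for j by (rule infsum_suminf_abs(1)[OF cols])
  have o1: "summable (\<lambda>i. \<bar>\<Sum>j. f i j\<bar>)"
  proof (rule summable_comparison_test'[OF tot])
    fix i show "norm \<bar>\<Sum>j. f i j\<bar> \<le> (\<Sum>j. \<bar>f i j\<bar>)"
      using summable_rabs[OF rows[of i]] by simp
  qed
  have o2: "summable (\<lambda>j. \<bar>\<Sum>i. f i j\<bar>)"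
  proof (rule summable_comparison_test'[OF ctot])
    fix j show "norm \<bar>\<Sum>i. f i j\<bar> \<le> \<bar>\<Sum>i. \<bar>f i j\<bar>\<bar>"
      using summable_rabs[OF cols[of j]] by simp
  qed
  show "(\<Sum>i. \<Sum>j. f i j) = (\<Sum>j. \<Sum>i. f i j)"
    using sw2 unfolding r1 c1 infsum_suminf_abs(1)[OF o1] infsum_suminf_abs(1)[OF o2] .
qed

lemma l2_sqset: "l2 = (sqset :: (nat \<Rightarrow> real) set)"
  by (simp add: l2_def sqset_def)

lemma l2_Rep: "Rep_sq (x :: real sq) \<in> l2"
  using Rep_sq[of x] by (simp add: l2_sqset)

lemma l2_Abs_inv: "x \<in> l2 \<Longrightarrow> Rep_sq (Abs_sq x :: real sq) = x"
  by (rule Abs_sq_inverse) (simp add: l2_sqset)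

lemma l2_inner_Rep: "l2_inner (Rep_sq x) (Rep_sq y) = inner (x :: real sq) y"
  by (simp add: l2_inner_def inner_sq.rep_eq)

lemma l2_norm_Rep: "l2_norm (Rep_sq x) = norm (x :: real sq)"
  by (simp add: l2_norm_def norm_sq_def inner_sq.rep_eq power2_eq_square)

lemma l2_inner_Abs: "x \<in> l2 \<Longrightarrow> y \<in> l2 \<Longrightarrow> l2_inner x y = inner (Abs_sq x :: real sq) (Abs_sq y)"
  using l2_inner_Rep[of "Abs_sq x" "Abs_sq y"] by (simp add: l2_Abs_inv)

lemma l2_norm_Abs: "x \<in> l2 \<Longrightarrow> l2_norm x = norm (Abs_sq x :: real sq)"
  using l2_norm_Rep[of "Abs_sq x"] by (simp add: l2_Abs_inv)

lemma l2_norm_nonneg: "x \<in> l2 \<Longrightarrow> 0 \<le> l2_norm x"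
  by (simp add: l2_norm_def l2_def suminf_nonneg)

lemma l2_norm_sq: "x \<in> l2 \<Longrightarrow> (l2_norm x)\<^sup>2 = (\<Sum>i. (x i)\<^sup>2)"
  by (simp add: l2_norm_def suminf_nonneg l2_def)

lemma l2_abs: "x \<in> l2 \<Longrightarrow> (\<lambda>i. \<bar>x i\<bar>) \<in> l2"
  by (simp add: l2_def)

lemma l2_norm_abs: "l2_norm (\<lambda>i. \<bar>x i\<bar>) = l2_norm x"
  by (simp add: l2_norm_def)

lemma l2_CS:
  assumes "x \<in> l2" "y \<in> l2"
  shows "summable (\<lambda>i. \<bar>x i * y i\<bar>)" "(\<Sum>i. \<bar>x i * y i\<bar>) \<le> l2_norm x * l2_norm y"
proof -
  have ax: "(\<lambda>i. \<bar>x i\<bar>) \<in> sqset" "(\<lambda>i. \<bar>y i\<bar>) \<in> sqset" using assms l2_abs l2_sqset by blast+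
  show "summable (\<lambda>i. \<bar>x i * y i\<bar>)"
    using sqset_inner_summable(2)[OF ax] by (simp add: abs_mult)
  have "(\<Sum>i. \<bar>x i * y i\<bar>) = l2_inner (\<lambda>i. \<bar>x i\<bar>) (\<lambda>i. \<bar>y i\<bar>)"
    by (simp add: l2_inner_def abs_mult)
  also have "\<dots> = inner (Abs_sq (\<lambda>i. \<bar>x i\<bar>) :: real sq) (Abs_sq (\<lambda>i. \<bar>y i\<bar>))"
    using assms by (intro l2_inner_Abs l2_abs)
  also have "\<dots> \<le> norm (Abs_sq (\<lambda>i. \<bar>x i\<bar>) :: real sq) * norm (Abs_sq (\<lambda>i. \<bar>y i\<bar>) :: real sq)"
    by (rule norm_cauchy_schwarz)
  also have "\<dots> = l2_norm x * l2_norm y"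
    using assms by (simp add: l2_norm_Abs[symmetric] l2_abs l2_norm_abs)
  finally show "(\<Sum>i. \<bar>x i * y i\<bar>) \<le> l2_norm x * l2_norm y" .
qed

lemma l2_inner_summable: "x \<in> l2 \<Longrightarrow> y \<in> l2 \<Longrightarrow> summable (\<lambda>i. x i * y i)"
  by (rule summable_rabs_cancel[OF l2_CS(1)])

lemma l2_inner_abs_le: "x \<in> l2 \<Longrightarrow> y \<in> l2 \<Longrightarrow> \<bar>l2_inner x y\<bar> \<le> l2_norm x * l2_norm y"
proof -
  assume a: "x \<in> l2" "y \<in> l2"
  have "\<bar>l2_inner x y\<bar> \<le> (\<Sum>i. \<bar>x i * y i\<bar>)"
    unfolding l2_inner_def by (rule summable_rabs[OF l2_CS(1)[OF a]])
  thus ?thesis using l2_CS(2)[OF a] by linarith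
qed

lemma unit_vec_l2: "unit_vec j \<in> l2"
proof -
  have "summable (\<lambda>i. (unit_vec j i)\<^sup>2)"
    by (rule summable_finite[of "{j}"]) (auto simp: unit_vec_def)
  thus ?thesis by (simp add: l2_def)
qed

lemma suminf_single: "(\<And>i. i \<noteq> j \<Longrightarrow> f i = 0) \<Longrightarrow> suminf f = (f j :: real)"
  using suminf_finite[of "{j}" f] by auto

lemma l2_inner_unit_right: "l2_inner y (unit_vec j) = y j"
  unfolding l2_inner_def by (subst suminf_single[of j]) (auto simp: unit_vec_def)

lemma l2_inner_unit_left: "l2_inner (unit_vec j) y = y j"
  unfolding l2_inner_def by (subst suminf_single[of j]) (auto simp: unit_vec_def)

lemma shift_le:
  fixes f :: "nat \<Rightarrow> real"
  assumes "summable f" "\<And>i. 0 \<le> f i"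
  shows "summable (\<lambda>m. f (m + n))" "(\<Sum>m. f (m + n)) \<le> suminf f"
proof -
  show "summable (\<lambda>m. f (m + n))" using assms(1) by (rule summable_ignore_initial_segment)
  have "suminf f = (\<Sum>m. f (m + n)) + (\<Sum>i<n. f i)" by (rule suminf_split_initial_segment[OF assms(1)])
  moreover have "(\<Sum>i<n. f i) \<ge> 0" by (rule sum_nonneg) (use assms in auto)
  ultimately show "(\<Sum>m. f (m + n)) \<le> suminf f" by linarith
qed

definition fromH :: "real sq sq \<Rightarrow> nat \<Rightarrow> nat \<Rightarrow> real" where
  "fromH h = (\<lambda>n. Rep_sq (Rep_sq h n))"

definition toH :: "(nat \<Rightarrow> nat \<Rightarrow> real) \<Rightarrow> real sq sq" where
  "toH X = Abs_sq (\<lambda>n. Abs_sq (X n))"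

lemma Htilde_iff: "X \<in> Htilde \<longleftrightarrow> (\<forall>n. X n \<in> l2) \<and> (\<lambda>n. Abs_sq (X n) :: real sq) \<in> sqset"
proof -
  have "(\<forall>n. X n \<in> l2) \<Longrightarrow> (\<lambda>n. (norm (Abs_sq (X n) :: real sq))\<^sup>2) = (\<lambda>n. (l2_norm (X n))\<^sup>2)"
    by (simp add: l2_norm_Abs)
  thus ?thesis by (auto simp: Htilde_def sqset_def)
qed

lemma fromH_Htilde: "fromH h \<in> Htilde" and Htilde_norm_fromH: "Htilde_norm (fromH h) = norm h"
proof -
  have l: "fromH h n \<in> l2" for n by (simp add: fromH_def l2_Rep)
  have e: "(\<lambda>n. Abs_sq (fromH h n) :: real sq) = Rep_sq h"
    by (simp add: fromH_def Rep_sq_inverse)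
  show "fromH h \<in> Htilde" using l e Rep_sq[of h] by (simp add: Htilde_iff)
  have "(\<lambda>n. (l2_norm (fromH h n))\<^sup>2) = (\<lambda>n. (norm (Rep_sq h n))\<^sup>2)"
    by (simp add: fromH_def l2_norm_Rep)
  thus "Htilde_norm (fromH h) = norm h"
    by (simp add: Htilde_norm_def sq_norm_sq[symmetric])
qed

lemma fromH_toH: "X \<in> Htilde \<Longrightarrow> fromH (toH X) = X"
  unfolding Htilde_iff fromH_def toH_def by (simp add: Abs_sq_inverse l2_Abs_inv)

lemma toH_fromH: "toH (fromH h) = h"
  unfolding fromH_def toH_def by (simp add: Rep_sq_inverse)

lemma fromH_diff: "fromH (a - b) = (\<lambda>n m. fromH a n m - fromH b n m)"
  by (simp add: fromH_def minus_sq.rep_eq)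

lemma fromH_scaleR: "fromH (c *\<^sub>R a) = (\<lambda>n m. c * fromH a n m)"
  by (simp add: fromH_def scaleR_sq.rep_eq)

lemma fromH_add: "fromH (a + b) = (\<lambda>n m. fromH a n m + fromH b n m)"
  by (simp add: fromH_def plus_sq.rep_eq)

lemma fromH_zero: "fromH 0 = (\<lambda>n m. 0)"
  by (simp add: fromH_def zero_sq.rep_eq)

lemma fromH_sum: "finite F \<Longrightarrow> fromH (\<Sum>k\<in>F. c k *\<^sub>R v k) = (\<lambda>n m. \<Sum>k\<in>F. c k * fromH (v k) n m)"
  by (induction F rule: finite_induct) (simp_all add: fromH_zero fromH_add fromH_scaleR)

lemma inner_fromH: "inner a b = (\<Sum>n. l2_inner (fromH a n) (fromH b n))"
  by (simp add: fromH_def l2_inner_Rep inner_sq.rep_eq)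

definition mop :: "(nat \<Rightarrow> nat \<Rightarrow> real) \<Rightarrow> (nat \<Rightarrow> real) \<Rightarrow> nat \<Rightarrow> real" where
  "mop M x = (\<lambda>i. \<Sum>j. M i j * x j)"

definition YM :: "(nat \<Rightarrow> nat \<Rightarrow> real) \<Rightarrow> nat \<Rightarrow> nat \<Rightarrow> real" where
  "YM M = (\<lambda>n m. (if m = 0 then 1 else 2) * M n (n + m))"

lemma Htilde_row: "M \<in> Htilde \<Longrightarrow> M i \<in> l2"
  by (simp add: Htilde_def)

lemma Htilde_rownorm: "M \<in> Htilde \<Longrightarrow> (\<lambda>i. l2_norm (M i)) \<in> l2"
  by (simp add: Htilde_def l2_def)

lemma Htilde_norm_sq: "M \<in> Htilde \<Longrightarrow> (Htilde_norm M)\<^sup>2 = (\<Sum>i. (l2_norm (M i))\<^sup>2)"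
  by (simp add: Htilde_def Htilde_norm_def suminf_nonneg)

lemma mop_eq: "mop M x i = l2_inner (M i) x"
  by (simp add: mop_def l2_inner_def)

lemma bil_abs:
  assumes MH: "M \<in> Htilde" and x: "x \<in> l2" and y: "y \<in> l2"
  shows "summable (\<lambda>j. \<bar>y i * M i j * x j\<bar>)" "summable (\<lambda>i. \<Sum>j. \<bar>y i * M i j * x j\<bar>)"
proof -
  have e: "\<bar>y i * M i j * x j\<bar> = \<bar>y i\<bar> * \<bar>M i j * x j\<bar>" for i j by (simp add: abs_mult)
  have r: "summable (\<lambda>j. \<bar>M i j * x j\<bar>)" for i using l2_CS(1)[OF Htilde_row[OF MH] x] .
  show "summable (\<lambda>j. \<bar>y i * M i j * x j\<bar>)" for i unfolding e by (rule summable_mult[OF r])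
  have s: "(\<Sum>j. \<bar>y i * M i j * x j\<bar>) = \<bar>y i\<bar> * (\<Sum>j. \<bar>M i j * x j\<bar>)" for i
    unfolding e by (rule suminf_mult[OF r])
  have b: "(\<Sum>j. \<bar>y i * M i j * x j\<bar>) \<le> \<bar>y i * l2_norm (M i)\<bar> * l2_norm x" for i
  proof -
    have "(\<Sum>j. \<bar>M i j * x j\<bar>) \<le> l2_norm (M i) * l2_norm x" using l2_CS(2)[OF Htilde_row[OF MH] x] .
    hence "\<bar>y i\<bar> * (\<Sum>j. \<bar>M i j * x j\<bar>) \<le> \<bar>y i\<bar> * (l2_norm (M i) * l2_norm x)"
      by (rule mult_left_mono) simp
    thus ?thesis unfolding s using l2_norm_nonneg[OF Htilde_row[OF MH]] by (simp add: abs_mult)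
  qed
  have t: "summable (\<lambda>i. \<bar>y i * l2_norm (M i)\<bar> * l2_norm x)"
    by (rule summable_mult2[OF l2_CS(1)[OF y Htilde_rownorm[OF MH]]])
  show "summable (\<lambda>i. \<Sum>j. \<bar>y i * M i j * x j\<bar>)"
  proof (rule summable_comparison_test'[OF t])
    fix i
    have "0 \<le> (\<Sum>j. \<bar>y i * M i j * x j\<bar>)"
      by (rule suminf_nonneg) (use \<open>\<And>i. summable (\<lambda>j. \<bar>y i * M i j * x j\<bar>)\<close> in auto)
    thus "norm (\<Sum>j. \<bar>y i * M i j * x j\<bar>) \<le> \<bar>y i * l2_norm (M i)\<bar> * l2_norm x" using b[of i] by simp
  qed
qed

lemma mop_row_summable: "M \<in> Htilde \<Longrightarrow> x \<in> l2 \<Longrightarrow> summable (\<lambda>j. M i j * x j)"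
  by (rule l2_inner_summable[OF Htilde_row])

lemma mop_l2:
  assumes MH: "M \<in> Htilde" and x: "x \<in> l2"
  shows "mop M x \<in> l2" "l2_norm (mop M x) \<le> Htilde_norm M * l2_norm x"
proof -
  have b: "(mop M x i)\<^sup>2 \<le> (l2_norm (M i))\<^sup>2 * (l2_norm x)\<^sup>2" for i
  proof -
    have "\<bar>mop M x i\<bar> \<le> l2_norm (M i) * l2_norm x"
      unfolding mop_eq by (rule l2_inner_abs_le[OF Htilde_row[OF MH] x])
    hence "\<bar>mop M x i\<bar>\<^sup>2 \<le> (l2_norm (M i) * l2_norm x)\<^sup>2" by (rule power_mono) simp
    thus ?thesis by (simp add: power_mult_distrib)
  qed
  have s0: "summable (\<lambda>i. (l2_norm (M i))\<^sup>2)" using MH by (simp add: Htilde_def)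
  have s: "summable (\<lambda>i. (l2_norm (M i))\<^sup>2 * (l2_norm x)\<^sup>2)" by (rule summable_mult2[OF s0])
  have sm: "summable (\<lambda>i. (mop M x i)\<^sup>2)"
    by (rule summable_comparison_test'[OF s]) (use b in simp)
  thus "mop M x \<in> l2" by (simp add: l2_def)
  have "(\<Sum>i. (mop M x i)\<^sup>2) \<le> (\<Sum>i. (l2_norm (M i))\<^sup>2 * (l2_norm x)\<^sup>2)"
    by (rule suminf_le[OF b sm s])
  also have "\<dots> = (Htilde_norm M)\<^sup>2 * (l2_norm x)\<^sup>2"
    by (simp add: Htilde_norm_sq[OF MH] suminf_mult2[OF s0])
  also have "\<dots> = (Htilde_norm M * l2_norm x)\<^sup>2" by (simp add: power_mult_distrib)
  finally have "sqrt (\<Sum>i. (mop M x i)\<^sup>2) \<le> sqrt ((Htilde_norm M * l2_norm x)\<^sup>2)"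
    by (rule real_sqrt_le_mono)
  moreover have "0 \<le> Htilde_norm M * l2_norm x"
    using l2_norm_nonneg[OF x] MH by (simp add: Htilde_norm_def Htilde_def suminf_nonneg)
  ultimately show "l2_norm (mop M x) \<le> Htilde_norm M * l2_norm x"
    by (simp add: l2_norm_def)
qed

lemma mop_linear:
  assumes MH: "M \<in> Htilde" and x: "x \<in> l2" and y: "y \<in> l2"
  shows "mop M (\<lambda>i. a * x i + b * y i) = (\<lambda>i. a * mop M x i + b * mop M y i)"
proof
  fix i
  have sx: "summable (\<lambda>j. M i j * x j)" by (rule mop_row_summable[OF MH x])
  have sy: "summable (\<lambda>j. M i j * y j)" by (rule mop_row_summable[OF MH y])
  have "(\<lambda>j. M i j * (a * x j + b * y j)) = (\<lambda>j. a * (M i j * x j) + b * (M i j * y j))"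
    by (simp add: algebra_simps)
  hence "mop M (\<lambda>i. a * x i + b * y i) i = (\<Sum>j. a * (M i j * x j) + b * (M i j * y j))"
    by (simp add: mop_def)
  also have "\<dots> = (\<Sum>j. a * (M i j * x j)) + (\<Sum>j. b * (M i j * y j))"
    by (rule suminf_add[symmetric]) (intro summable_mult sx sy)+
  also have "\<dots> = a * mop M x i + b * mop M y i"
    by (simp add: mop_def suminf_mult[OF sx] suminf_mult[OF sy])
  finally show "mop M (\<lambda>i. a * x i + b * y i) i = a * mop M x i + b * mop M y i" .
qed

lemma mop_sa:
  assumes MH: "M \<in> Htilde" and sym: "\<And>i j. M i j = M j i" and x: "x \<in> l2" and y: "y \<in> l2"
  shows "l2_inner (mop M x) y = l2_inner x (mop M y)"
proof -
  have L: "l2_inner (mop M x) y = (\<Sum>i. \<Sum>j. y i * M i j * x j)"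
  proof -
    have "mop M x i * y i = (\<Sum>j. y i * M i j * x j)" for i
    proof -
      have "mop M x i * y i = (\<Sum>j. M i j * x j * y i)"
        unfolding mop_def by (rule suminf_mult2[OF mop_row_summable[OF MH x]])
      thus ?thesis by (simp add: algebra_simps)
    qed
    thus ?thesis by (simp add: l2_inner_def)
  qed
  have R: "l2_inner x (mop M y) = (\<Sum>j. \<Sum>i. y i * M i j * x j)"
  proof -
    have "x j * mop M y j = (\<Sum>i. y i * M i j * x j)" for j
    proof -
      have "x j * mop M y j = (\<Sum>i. x j * (M j i * y i))"
        unfolding mop_def by (rule suminf_mult[OF mop_row_summable[OF MH y], symmetric])
      thus ?thesis by (simp add: algebra_simps sym[of j])
    qed
    thus ?thesis by (simp add: l2_inner_def)
  qed
  show ?thesis unfolding L R by (rule DS(1)[OF bil_abs(1)[OF MH x y] bil_abs(2)[OF MH x y]])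
qed

lemma mop_unit: "mop M (unit_vec j) = (\<lambda>i. M i j)"
  unfolding mop_def by (rule ext, subst suminf_single[of j]) (auto simp: unit_vec_def)

lemma mop_props:
  assumes MH: "M \<in> Htilde" and sym: "\<And>i j. M i j = M j i"
  shows "hilbert_schmidt_l2 (mop M)" "self_adjoint_l2 (mop M)"
proof -
  have bl: "bounded_linear_l2 (mop M)"
    unfolding bounded_linear_l2_def
    using mop_l2[OF MH] mop_linear[OF MH] by blast
  have "(\<lambda>i. M i j) = M j" for j using sym by (simp add: fun_eq_iff)
  hence "(\<lambda>j. (l2_norm (mop M (unit_vec j)))\<^sup>2) = (\<lambda>j. (l2_norm (M j))\<^sup>2)"
    by (simp add: mop_unit)
  hence "summable (\<lambda>j. (l2_norm (mop M (unit_vec j)))\<^sup>2)" using MH by (simp add: Htilde_def)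
  thus "hilbert_schmidt_l2 (mop M)" using bl by (simp add: hilbert_schmidt_l2_def)
  show "self_adjoint_l2 (mop M)"
    unfolding self_adjoint_l2_def using mop_sa[OF MH sym] by blast
qed

lemma key:
  assumes MH: "M \<in> Htilde" and sym: "\<And>i j. M i j = M j i" and x: "x \<in> l2"
  shows "(\<Sum>n. l2_inner (YM M n) (tilde x n)) = l2_inner (mop M x) x"
proof -
  define g where "g i j = x i * M i j * x j" for i j
  define G where "G n j = (if n < j then g n j else 0)" for n j
  have rg: "summable (\<lambda>j. \<bar>g i j\<bar>)" for i unfolding g_def by (rule bil_abs(1)[OF MH x x])
  have tg: "summable (\<lambda>i. \<Sum>j. \<bar>g i j\<bar>)" unfolding g_def by (rule bil_abs(2)[OF MH x x])
  have gs: "summable (\<lambda>j. g i j)" for i by (rule summable_rabs_cancel[OF rg])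
  have gsym: "g i j = g j i" for i j by (simp add: g_def sym[of i j] mult_ac)
  have absG: "\<bar>G n j\<bar> \<le> \<bar>g n j\<bar>" for n j by (simp add: G_def)
  have rG: "summable (\<lambda>j. \<bar>G n j\<bar>)" for n
    by (rule summable_comparison_test'[OF rg[of n]]) (simp add: absG)
  have leG: "(\<Sum>j. \<bar>G n j\<bar>) \<le> (\<Sum>j. \<bar>g n j\<bar>)" for n
    by (rule suminf_le[OF absG rG rg])
  have nnG: "0 \<le> (\<Sum>j. \<bar>G n j\<bar>)" for n by (rule suminf_nonneg[OF rG]) simp
  have tG: "summable (\<lambda>n. \<Sum>j. \<bar>G n j\<bar>)"
    by (rule summable_comparison_test'[OF tg]) (use leG nnG in simp)
  note DSG = DS[of G, OF rG tG]
  have Gs: "summable (\<lambda>j. G n j)" for n by (rule summable_rabs_cancel[OF rG])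
  have colG: "(\<Sum>n. G n j) = (\<Sum>n<j. g j n)" for j
  proof -
    have "(\<Sum>n. G n j) = (\<Sum>n\<in>{..<j}. G n j)" by (rule suminf_finite) (auto simp: G_def)
    also have "\<dots> = (\<Sum>n<j. g j n)" by (rule sum.cong) (auto simp: G_def gsym)
    finally show ?thesis .
  qed
  define A where "A n = (\<Sum>m. g n (m + n))" for n
  define B where "B n = (\<Sum>j. G n j)" for n
  define C where "C i = (\<Sum>j<i. g i j)" for i
  have Bshift: "B n = (\<Sum>m. G n (m + n))" for n
  proof -
    have "B n = (\<Sum>m. G n (m + n)) + (\<Sum>j<n. G n j)"
      unfolding B_def by (rule suminf_split_initial_segment[OF Gs])
    moreover have "(\<Sum>j<n. G n j) = 0" by (rule sum.neutral) (auto simp: G_def)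
    ultimately show ?thesis by simp
  qed
  have CG: "C i = (\<Sum>n. G n i)" for i unfolding C_def colG ..
  have LHSn: "l2_inner (YM M n) (tilde x n) = A n + B n" for n
  proof -
    have pt: "YM M n m * tilde x n m = g n (m + n) + G n (m + n)" for m
      by (cases "m = 0") (auto simp: YM_def tilde_def g_def G_def add.commute[of n m] algebra_simps)
    have s1: "summable (\<lambda>m. g n (m + n))" by (rule summable_ignore_initial_segment[OF gs])
    have s2: "summable (\<lambda>m. G n (m + n))" by (rule summable_ignore_initial_segment[OF Gs])
    have "l2_inner (YM M n) (tilde x n) = (\<Sum>m. g n (m + n) + G n (m + n))"
      by (simp add: l2_inner_def pt)
    also have "\<dots> = A n + B n" unfolding A_def Bshift by (rule suminf_add[symmetric, OF s1 s2])
    finally show ?thesis .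
  qed
  have RHSi: "mop M x i * x i = A i + C i" for i
  proof -
    have "mop M x i * x i = (\<Sum>j. M i j * x j * x i)"
      unfolding mop_def by (rule suminf_mult2[OF mop_row_summable[OF MH x]])
    also have "\<dots> = (\<Sum>j. g i j)" by (simp add: g_def mult_ac)
    also have "\<dots> = A i + C i" unfolding A_def C_def by (rule suminf_split_initial_segment[OF gs])
    finally show ?thesis .
  qed
  have sA: "summable A"
  proof (rule summable_comparison_test'[OF tg])
    fix n
    have "\<bar>A n\<bar> \<le> (\<Sum>m. \<bar>g n (m + n)\<bar>)"
      unfolding A_def by (rule summable_rabs[OF summable_ignore_initial_segment[OF rg]])
    also have "\<dots> \<le> (\<Sum>j. \<bar>g n j\<bar>)" by (rule shift_le(2)[OF rg]) simp
    finally show "norm (A n) \<le> (\<Sum>j. \<bar>g n j\<bar>)" by simp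
  qed
  have sB: "summable B"
  proof (rule summable_comparison_test'[OF tG])
    fix n show "norm (B n) \<le> (\<Sum>j. \<bar>G n j\<bar>)" unfolding B_def using summable_rabs[OF rG] by simp
  qed
  have sC: "summable C"
  proof (rule summable_comparison_test'[OF DSG(3)])
    fix i show "norm (C i) \<le> (\<Sum>n. \<bar>G n i\<bar>)" unfolding CG using summable_rabs[OF DSG(2)] by simp
  qed
  have BC: "suminf B = suminf C" unfolding B_def CG by (rule DSG(1))
  have "(\<Sum>n. l2_inner (YM M n) (tilde x n)) = suminf A + suminf B"
    unfolding LHSn by (rule suminf_add[symmetric, OF sA sB])
  also have "\<dots> = suminf A + suminf C" by (simp add: BC)
  also have "\<dots> = (\<Sum>i. mop M x i * x i)" unfolding RHSi by (rule suminf_add[OF sA sC])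
  also have "\<dots> = l2_inner (mop M x) x" by (simp add: l2_inner_def)
  finally show ?thesis .
qed

lemma YM_Htilde:
  assumes MH: "M \<in> Htilde"
  shows "YM M \<in> Htilde"
proof -
  have row: "YM M n \<in> l2 \<and> (l2_norm (YM M n))\<^sup>2 \<le> 4 * (l2_norm (M n))\<^sup>2" for n
  proof -
    have Mn: "summable (\<lambda>j. (M n j)\<^sup>2)" using Htilde_row[OF MH] by (simp add: l2_def)
    have sh: "summable (\<lambda>m. (M n (m + n))\<^sup>2)" "(\<Sum>m. (M n (m + n))\<^sup>2) \<le> (\<Sum>j. (M n j)\<^sup>2)"
      using shift_le[OF Mn] by auto
    have b: "(YM M n m)\<^sup>2 \<le> 4 * (M n (m + n))\<^sup>2" for m
      by (cases "m = 0") (auto simp: YM_def power_mult_distrib add.commute)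
    have s4: "summable (\<lambda>m. 4 * (M n (m + n))\<^sup>2)" by (rule summable_mult[OF sh(1)])
    have sy: "summable (\<lambda>m. (YM M n m)\<^sup>2)"
      by (rule summable_comparison_test'[OF s4]) (use b in simp)
    have "(\<Sum>m. (YM M n m)\<^sup>2) \<le> (\<Sum>m. 4 * (M n (m + n))\<^sup>2)" by (rule suminf_le[OF b sy s4])
    also have "\<dots> = 4 * (\<Sum>m. (M n (m + n))\<^sup>2)" by (rule suminf_mult[OF sh(1)])
    also have "\<dots> \<le> 4 * (l2_norm (M n))\<^sup>2" using sh(2) l2_norm_sq[OF Htilde_row[OF MH]] by simp
    finally show ?thesis using sy l2_norm_sq[of "YM M n"] by (simp add: l2_def)
  qed
  have s: "summable (\<lambda>n. 4 * (l2_norm (M n))\<^sup>2)" using MH by (simp add: Htilde_def summable_mult)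
  have "summable (\<lambda>n. (l2_norm (YM M n))\<^sup>2)"
    by (rule summable_comparison_test'[OF s]) (use row in simp)
  thus ?thesis using row by (simp add: Htilde_def)
qed

lemma tilde_Htilde:
  assumes x: "x \<in> l2"
  shows "tilde x \<in> Htilde"
proof -
  have X: "summable (\<lambda>j. (x j)\<^sup>2)" using x by (simp add: l2_def)
  have row: "tilde x n \<in> l2 \<and> (l2_norm (tilde x n))\<^sup>2 \<le> (x n)\<^sup>2 * (l2_norm x)\<^sup>2" for n
  proof -
    have sh: "summable (\<lambda>m. (x (m + n))\<^sup>2)" "(\<Sum>m. (x (m + n))\<^sup>2) \<le> (\<Sum>j. (x j)\<^sup>2)"
      using shift_le[OF X] by auto
    have e: "(tilde x n m)\<^sup>2 = (x n)\<^sup>2 * (x (m + n))\<^sup>2" for m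
      by (simp add: tilde_def power_mult_distrib add.commute)
    have sy: "summable (\<lambda>m. (tilde x n m)\<^sup>2)" unfolding e by (rule summable_mult[OF sh(1)])
    have "(\<Sum>m. (tilde x n m)\<^sup>2) = (x n)\<^sup>2 * (\<Sum>m. (x (m + n))\<^sup>2)" unfolding e by (rule suminf_mult[OF sh(1)])
    also have "\<dots> \<le> (x n)\<^sup>2 * (l2_norm x)\<^sup>2" using sh(2) l2_norm_sq[OF x] by (simp add: mult_left_mono)
    finally show ?thesis using sy l2_norm_sq[of "tilde x n"] by (simp add: l2_def)
  qed
  have s: "summable (\<lambda>n. (x n)\<^sup>2 * (l2_norm x)\<^sup>2)" by (rule summable_mult2[OF X])
  have "summable (\<lambda>n. (l2_norm (tilde x n))\<^sup>2)"
    by (rule summable_comparison_test'[OF s]) (use row in simp)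
  thus ?thesis using row by (simp add: Htilde_def)
qed

lemma span_far:
  assumes Y: "Y \<in> Htilde" and V: "\<And>k. V k \<in> Htilde" and fin: "finite F"
  shows "Htilde_norm (\<lambda>n m. Y n m - (\<Sum>k\<in>F. c k * V k n m)) = norm (toH Y - (\<Sum>k\<in>F. c k *\<^sub>R toH (V k)))"
proof -
  have "fromH (toH Y - (\<Sum>k\<in>F. c k *\<^sub>R toH (V k))) = (\<lambda>n m. Y n m - (\<Sum>k\<in>F. c k * V k n m))"
    by (simp add: fromH_diff fromH_sum[OF fin] fromH_toH[OF Y] fromH_toH[OF V])
  thus ?thesis using Htilde_norm_fromH by metis
qed

lemma inner_toH: "X \<in> Htilde \<Longrightarrow> Z \<in> Htilde \<Longrightarrow> inner (toH X) (toH Z) = (\<Sum>n. l2_inner (X n) (Z n))"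
  by (simp add: inner_fromH fromH_toH)

lemma dir21:
  assumes l2x: "\<And>k. xs k \<in> l2"
    and cs: "closed_span_Htilde (\<lambda>k. tilde (xs k)) = Htilde"
  shows "injective_family xs"
  unfolding injective_family_def
proof (intro allI impI ballI)
  fix T x
  assume A: "hilbert_schmidt_l2 T \<and> self_adjoint_l2 T \<and> (\<forall>k. l2_inner (T (xs k)) (xs k) = 0)"
    and x: "x \<in> l2"
  have BL: "bounded_linear_l2 T" using A by (simp add: hilbert_schmidt_l2_def)
  have Tl2: "y \<in> l2 \<Longrightarrow> T y \<in> l2" for y using BL by (simp add: bounded_linear_l2_def)
  have SA: "y \<in> l2 \<Longrightarrow> z \<in> l2 \<Longrightarrow> l2_inner (T y) z = l2_inner y (T z)" for y z
    using A by (simp add: self_adjoint_l2_def)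
  define M where "M i j = T (unit_vec i) j" for i j
  have Mrow: "M i = T (unit_vec i)" for i by (simp add: M_def fun_eq_iff)
  have MH: "M \<in> Htilde"
    using A Tl2[OF unit_vec_l2] by (simp add: Htilde_def Mrow hilbert_schmidt_l2_def)
  have sym: "M i j = M j i" for i j
  proof -
    have "M i j = l2_inner (T (unit_vec i)) (unit_vec j)" by (simp add: M_def l2_inner_unit_right)
    also have "\<dots> = l2_inner (unit_vec i) (T (unit_vec j))" by (rule SA[OF unit_vec_l2 unit_vec_l2])
    also have "\<dots> = M j i" by (simp add: M_def l2_inner_unit_left)
    finally show ?thesis .
  qed
  have Tmop: "T y = mop M y" if y: "y \<in> l2" for y
  proof
    fix i
    have "T y i = l2_inner (T y) (unit_vec i)" by (simp add: l2_inner_unit_right)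
    also have "\<dots> = l2_inner y (T (unit_vec i))" by (rule SA[OF y unit_vec_l2])
    also have "\<dots> = mop M y i" by (simp add: l2_inner_def mop_def M_def mult.commute)
    finally show "T y i = mop M y i" .
  qed
  define Y where "Y = YM M"
  have YH: "Y \<in> Htilde" unfolding Y_def by (rule YM_Htilde[OF MH])
  have VH: "tilde (xs k) \<in> Htilde" for k by (rule tilde_Htilde[OF l2x])
  have orth: "inner (toH Y) (toH (tilde (xs k))) = 0" for k
  proof -
    have "inner (toH Y) (toH (tilde (xs k))) = (\<Sum>n. l2_inner (Y n) (tilde (xs k) n))"
      by (rule inner_toH[OF YH VH])
    also have "\<dots> = (\<Sum>n. l2_inner (YM M n) (tilde (xs k) n))" by (simp add: Y_def)
    also have "\<dots> = l2_inner (mop M (xs k)) (xs k)" by (rule key[OF MH sym l2x])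
    also have "\<dots> = l2_inner (T (xs k)) (xs k)" by (simp add: Tmop[OF l2x])
    also have "\<dots> = 0" using A by simp
    finally show ?thesis .
  qed
  have "Y \<in> closed_span_Htilde (\<lambda>k. tilde (xs k))" using cs YH by simp
  hence close: "\<forall>\<epsilon>>0. \<exists>F c. finite F \<and> Htilde_norm (\<lambda>n m. Y n m - (\<Sum>k\<in>F. c k * tilde (xs k) n m)) < \<epsilon>"
    by (simp add: closed_span_Htilde_def)
  have n0: "norm (toH Y) = 0"
  proof (rule ccontr)
    define r where "r = norm (toH Y)"
    assume "norm (toH Y) \<noteq> 0"
    hence r: "r > 0" by (simp add: r_def)
    then obtain F c where fin: "finite F" and lt: "Htilde_norm (\<lambda>n m. Y n m - (\<Sum>k\<in>F. c k * tilde (xs k) n m)) < r"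
      using close by blast
    define S where "S = (\<Sum>k\<in>F. c k *\<^sub>R toH (tilde (xs k)))"
    have lt2: "norm (toH Y - S) < r" using lt unfolding S_def span_far[OF YH VH fin] .
    have "inner (toH Y) S = 0" unfolding S_def by (simp add: inner_sum_right orth)
    hence "r\<^sup>2 = inner (toH Y) (toH Y - S)"
      by (simp add: r_def inner_diff_right power2_norm_eq_inner)
    also have "\<dots> \<le> r * norm (toH Y - S)" unfolding r_def by (rule norm_cauchy_schwarz)
    also have "\<dots> < r * r" using lt2 r by simp
    finally show False by (simp add: power2_eq_square)
  qed
  hence "toH Y = 0" by simp
  hence Y0: "Y = (\<lambda>n m. 0)" using fromH_toH[OF YH] fromH_zero by metis
  have Mdiag: "M n (n + m) = 0" for n m
    using fun_cong[OF fun_cong[OF Y0, of n], of m] by (simp add: Y_def YM_def split: if_splits)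
  have M0: "M i j = 0" for i j
  proof (cases "i \<le> j")
    case True thus ?thesis using Mdiag[of i "j - i"] by simp
  next
    case False thus ?thesis using Mdiag[of j "i - j"] sym[of i j] by simp
  qed
  show "T x = (\<lambda>i. 0)" by (simp add: Tmop[OF x] mop_def M0)
qed

lemma sum_extend:
  fixes v :: "nat \<Rightarrow> 'a::real_vector"
  assumes "finite G" "F \<subseteq> G"
  shows "(\<Sum>k\<in>F. c k *\<^sub>R v k) = (\<Sum>k\<in>G. (if k \<in> F then c k else 0) *\<^sub>R v k)"
proof -
  have "(\<Sum>k\<in>G. (if k \<in> F then c k else 0) *\<^sub>R v k) = (\<Sum>k\<in>F. (if k \<in> F then c k else 0) *\<^sub>R v k)"
    by (rule sum.mono_neutral_right) (use assms in auto)
  also have "\<dots> = (\<Sum>k\<in>F. c k *\<^sub>R v k)" by simp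
  finally show ?thesis by simp
qed

lemma span_subspace:
  fixes v :: "nat \<Rightarrow> 'a::real_vector"
  shows "subspace {S. \<exists>F c. finite F \<and> S = (\<Sum>k\<in>F. c k *\<^sub>R v k)}"
  unfolding subspace_def
proof (intro conjI ballI allI)
  show "0 \<in> {S. \<exists>F c. finite F \<and> S = (\<Sum>k\<in>F. c k *\<^sub>R v k)}"
    by (rule CollectI, rule exI[of _ "{}"]) simp
next
  fix x y assume "x \<in> {S. \<exists>F c. finite F \<and> S = (\<Sum>k\<in>F. c k *\<^sub>R v k)}"
    "y \<in> {S. \<exists>F c. finite F \<and> S = (\<Sum>k\<in>F. c k *\<^sub>R v k)}"
  then obtain F c G d where F: "finite F" "x = (\<Sum>k\<in>F. c k *\<^sub>R v k)"
    and G: "finite G" "y = (\<Sum>k\<in>G. d k *\<^sub>R v k)" by blast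
  have eq: "x + y = (\<Sum>k\<in>F \<union> G. ((if k \<in> F then c k else 0) + (if k \<in> G then d k else 0)) *\<^sub>R v k)"
    unfolding F(2) G(2) sum_extend[OF finite_UnI[OF F(1) G(1)] Un_upper1, of c v]
      sum_extend[OF finite_UnI[OF F(1) G(1)] Un_upper2, of d v]
    by (simp add: sum.distrib scaleR_add_left)
  show "x + y \<in> {S. \<exists>F c. finite F \<and> S = (\<Sum>k\<in>F. c k *\<^sub>R v k)}"
    by (rule CollectI, rule exI[of _ "F \<union> G"],
        rule exI[of _ "\<lambda>k. (if k \<in> F then c k else 0) + (if k \<in> G then d k else 0)"]) (use eq F G in simp)
next
  fix a x assume "x \<in> {S. \<exists>F c. finite F \<and> S = (\<Sum>k\<in>F. c k *\<^sub>R v k)}"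
  then obtain F c where F: "finite F" "x = (\<Sum>k\<in>F. c k *\<^sub>R v k)" by blast
  have eq: "a *\<^sub>R x = (\<Sum>k\<in>F. (a * c k) *\<^sub>R v k)" unfolding F(2) by (simp add: scaleR_sum_right)
  show "a *\<^sub>R x \<in> {S. \<exists>F c. finite F \<and> S = (\<Sum>k\<in>F. c k *\<^sub>R v k)}"
    by (rule CollectI, rule exI[of _ F], rule exI[of _ "\<lambda>k. a * c k"]) (use eq F in simp)
qed

definition cc :: "nat \<Rightarrow> real" where "cc m = (if m = 0 then 1 else 2)"

definition MW :: "(nat \<Rightarrow> nat \<Rightarrow> real) \<Rightarrow> nat \<Rightarrow> nat \<Rightarrow> real" where
  "MW W i j = (if i \<le> j then W i (j - i) / cc (j - i) else W j (i - j) / cc (i - j))"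

lemma MW_sym: "MW W i j = MW W j i"
  by (cases i j rule: linorder_cases) (auto simp: MW_def)

lemma YM_MW: "YM (MW W) = W"
  by (auto simp: YM_def MW_def cc_def fun_eq_iff)

lemma MW_Htilde:
  assumes WH: "W \<in> Htilde"
  shows "MW W \<in> Htilde"
proof -
  define N where "N i j = (if i \<le> j then (W i (j - i))\<^sup>2 else 0)" for i j
  have Nnn: "0 \<le> N i j" for i j by (simp add: N_def)
  have Wi: "summable (\<lambda>m. (W i m)\<^sup>2)" for i using Htilde_row[OF WH] by (simp add: l2_def)
  have Nrow: "summable (\<lambda>j. N i j) \<and> (\<Sum>j. N i j) = (l2_norm (W i))\<^sup>2" for i
  proof -
    have sh: "(\<lambda>m. N i (m + i)) = (\<lambda>m. (W i m)\<^sup>2)" by (simp add: N_def fun_eq_iff)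
    have s: "summable (\<lambda>j. N i j)" using summable_iff_shift[of "N i" i] Wi[of i] sh by simp
    have "(\<Sum>j. N i j) = (\<Sum>m. N i (m + i)) + (\<Sum>j<i. N i j)" by (rule suminf_split_initial_segment[OF s])
    moreover have "(\<Sum>j<i. N i j) = 0" by (rule sum.neutral) (auto simp: N_def)
    ultimately have "(\<Sum>j. N i j) = (\<Sum>m. (W i m)\<^sup>2)" using sh by simp
    thus ?thesis using s l2_norm_sq[OF Htilde_row[OF WH]] by simp
  qed
  have rN: "summable (\<lambda>j. \<bar>N i j\<bar>)" for i using Nrow Nnn by simp
  have tN: "summable (\<lambda>i. \<Sum>j. \<bar>N i j\<bar>)" using Nrow Nnn WH by (simp add: Htilde_def)
  note DSN = DS[of N, OF rN tN]
  have colN: "summable (\<lambda>j. N j i)" for i using DSN(2)[of i] Nnn by simp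
  have colT: "summable (\<lambda>i. \<Sum>j. N j i)" using DSN(3) Nnn by simp
  have bnd: "(MW W i j)\<^sup>2 \<le> N i j + N j i" for i j
  proof (cases i j rule: linorder_cases)
    case less
    have "(MW W i j)\<^sup>2 = (W i (j - i))\<^sup>2 / 4" using less by (simp add: MW_def cc_def power_divide)
    also have "\<dots> \<le> N i j" using less by (simp add: N_def)
    finally show ?thesis using Nnn[of j i] by simp
  next
    case equal thus ?thesis by (simp add: MW_def cc_def N_def)
  next
    case greater
    have "(MW W i j)\<^sup>2 = (W j (i - j))\<^sup>2 / 4" using greater by (simp add: MW_def cc_def power_divide)
    also have "\<dots> \<le> N j i" using greater by (simp add: N_def)
    finally show ?thesis using Nnn[of i j] by simp
  qed
  have rowsum: "summable (\<lambda>j. N i j + N j i)" for i using Nrow colN by (intro summable_add) auto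
  have rowM: "summable (\<lambda>j. (MW W i j)\<^sup>2)" for i
    by (rule summable_comparison_test'[OF rowsum]) (use bnd in simp)
  have rowle: "(l2_norm (MW W i))\<^sup>2 \<le> (\<Sum>j. N i j) + (\<Sum>j. N j i)" for i
  proof -
    have "(l2_norm (MW W i))\<^sup>2 = (\<Sum>j. (MW W i j)\<^sup>2)" using rowM[of i] by (simp add: l2_norm_sq l2_def)
    also have "\<dots> \<le> (\<Sum>j. N i j + N j i)" by (rule suminf_le[OF bnd rowM rowsum])
    also have "\<dots> = (\<Sum>j. N i j) + (\<Sum>j. N j i)" using Nrow colN by (intro suminf_add[symmetric]) auto
    finally show ?thesis .
  qed
  have tot: "summable (\<lambda>i. (\<Sum>j. N i j) + (\<Sum>j. N j i))"
    using tN Nnn colT by (intro summable_add) auto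
  have "summable (\<lambda>i. (l2_norm (MW W i))\<^sup>2)"
    by (rule summable_comparison_test'[OF tot]) (use rowle in simp)
  thus ?thesis using rowM by (simp add: Htilde_def l2_def)
qed

lemma dir12:
  assumes l2x: "\<And>k. xs k \<in> l2"
    and inj: "injective_family xs"
  shows "closed_span_Htilde (\<lambda>k. tilde (xs k)) = Htilde"
proof (rule ccontr)
  assume ne: "closed_span_Htilde (\<lambda>k. tilde (xs k)) \<noteq> Htilde"
  have "closed_span_Htilde (\<lambda>k. tilde (xs k)) \<subseteq> Htilde" by (auto simp: closed_span_Htilde_def)
  with ne obtain Y where YH: "Y \<in> Htilde" and Yn: "Y \<notin> closed_span_Htilde (\<lambda>k. tilde (xs k))" by blast
  then obtain e where e: "e > 0"
    and far0: "\<And>F c. finite F \<Longrightarrow> e \<le> Htilde_norm (\<lambda>n m. Y n m - (\<Sum>k\<in>F. c k * tilde (xs k) n m))"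
    unfolding closed_span_Htilde_def by (auto simp: not_less)
  have VH: "tilde (xs k) \<in> Htilde" for k by (rule tilde_Htilde[OF l2x])
  define v where "v k = toH (tilde (xs k))" for k
  define Sp where "Sp = {S. \<exists>F c. finite F \<and> S = (\<Sum>k\<in>F. c k *\<^sub>R v k)}"
  have sub: "subspace Sp" unfolding Sp_def by (rule span_subspace)
  have far: "\<forall>z\<in>Sp. e \<le> norm (toH Y - z)"
  proof
    fix z assume "z \<in> Sp"
    then obtain F c where F: "finite F" "z = (\<Sum>k\<in>F. c k *\<^sub>R v k)" unfolding Sp_def by blast
    show "e \<le> norm (toH Y - z)" using far0[OF F(1), of c] unfolding F(2) v_def span_far[OF YH VH F(1)] .
  qed
  obtain W where W0: "W \<noteq> 0" and Worth: "\<forall>s\<in>Sp. inner W s = 0"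
    using orth_exists[OF sub e far] by blast
  have vS: "v k \<in> Sp" for k unfolding Sp_def by (rule CollectI, rule exI[of _ "{k}"], rule exI[of _ "\<lambda>_. 1"]) simp
  define W' where "W' = fromH W"
  have W'H: "W' \<in> Htilde" unfolding W'_def by (rule fromH_Htilde)
  obtain n m where nm: "W' n m \<noteq> 0"
  proof (rule ccontr)
    assume "\<not> thesis"
    hence "\<forall>n m. W' n m = 0" using that by blast
    hence "W' = fromH 0" by (simp add: fromH_zero fun_eq_iff)
    hence "W = 0" using toH_fromH unfolding W'_def by metis
    thus False using W0 by simp
  qed
  define M where "M = MW W'"
  have MH: "M \<in> Htilde" unfolding M_def by (rule MW_Htilde[OF W'H])
  have sym: "\<And>i j. M i j = M j i" unfolding M_def by (rule MW_sym)
  have quad: "l2_inner (mop M (xs k)) (xs k) = 0" for k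
  proof -
    have "l2_inner (mop M (xs k)) (xs k) = (\<Sum>n. l2_inner (YM M n) (tilde (xs k) n))"
      by (rule key[OF MH sym l2x, symmetric])
    also have "\<dots> = (\<Sum>n. l2_inner (W' n) (fromH (v k) n))"
      by (simp add: M_def YM_MW v_def fromH_toH[OF VH])
    also have "\<dots> = inner W (v k)" by (simp add: inner_fromH W'_def)
    also have "\<dots> = 0" using Worth vS by blast
    finally show ?thesis .
  qed
  have "\<forall>y\<in>l2. mop M y = (\<lambda>i. 0)"
    using inj mop_props[OF MH sym] quad unfolding injective_family_def by blast
  hence "mop M (unit_vec (n + m)) n = 0" using unit_vec_l2 by simp
  hence "M n (n + m) = 0" by (simp add: mop_unit)
  thus False using nm by (simp add: M_def MW_def cc_def split: if_splits)
qed

theorem mainTheorem11: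
  fixes xs :: "nat \<Rightarrow> (nat \<Rightarrow> real)"
  assumes "is_frame xs"
  shows "injective_family xs \<longleftrightarrow> closed_span_Htilde (\<lambda>k. tilde (xs k)) = Htilde"
proof -
  have l2x: "\<And>k. xs k \<in> l2" using assms by (simp add: is_frame_def)
  show ?thesis using dir12[of xs, OF l2x] dir21[of xs, OF l2x] by blast
qed

end
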